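(* Let $P$ be a probability measure on $(\Omega,\mathcal A)$, let $\delta\in(\tfrac12,1)$, and let $\bar{\mathbf C}\subseteq\bar{\mathcal A}$ be a C-class. If $\bar T(P,\delta)\subseteq\bar{\mathbf C}$, then $\bar T(P,\delta)\sim\bar{\mathbf C}$; equivalently, $\bar M_{\bar{\mathbf C}}=\bar P$ on $\bar{\mathcal A}$.
   Context: Let $(\Omega,\mathcal A)$ be a measurable space. For $n\ge1$, $\mathcal A^n$ is the product $\sigma$-algebra on $\Omega^n$; the extended event space is $\bar{\mathcal A}=\bigcup_{n\ge1}\mathcal A^n$, events tagged by their level $n$ (written $A^{(n)}$). For $k\ge1$, $(\Omega^n)^k$ is identified with $\Omega^{nk}$ and $(\mathcal A^n)^k$ with $\mathcal A^{nk}$. For a probability measure $P$ on $\mathcal A$, $P^n$ is its $n$-fold product, $\bar P(A^{(n)})=P^n(A^{(n)})$, and $\bar T(P,\delta)=\{A\in\bar{\mathcal A}:\bar P(A)\ge\delta\}$. For $A^{(n)}\in\mathcal A^n$, an interval $I\subseteq[0,1]$ and $k\in\mathbb N^+$, $S(A^{(n)},I,k)=\{(\omega_1,\dots,\omega_k)\in(\Omega^n)^k:\frac1k\sum_{i=1}^k\chi_{A^{(n)}}(\omega_i)\in I\}$. A class $\bar{\mathbf C}\subseteq\bar{\mathcal A}$ is a C-class if for every $n$ the component $\mathcal C^{(n)}=\bar{\mathbf C}\cap\mathcal A^n$ satisfies: $\Omega^n\in\mathcal C^{(n)}$; if $A\in\mathcal C^{(n)}$, $B\in\mathcal A^n$,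 $A\subseteq B$ then $B\in\mathcal C^{(n)}$; $\mathcal C^{(n)}$ contains no two disjoint events. "$S(A,I,k)\in\bar{\mathbf C}$ definitively" means there is $k_0$ with $S(A,I,k)\in\bar{\mathbf C}$ for all $k>k_0$. The C-measure of a C-class is $\bar M_{\bar{\mathbf C}}(A)=\sup\{\sigma\in[0,1]: S(A,[\sigma,1],k)\in\bar{\mathbf C}\text{ definitively}\}$. Two C-classes are (asymptotically) equivalent, $\bar{\mathbf C}_1\sim\bar{\mathbf C}_2$, if $\bar M_{\bar{\mathbf C}_1}=\bar M_{\bar{\mathbf C}_2}$. *)

theory Defs
  imports "HOL-Probability.Probability"
begin

text \<open>An element of the extended event space is a pair (n, A) with n \<ge> 1 and
A in the product sigma-algebra A^n on Omega^n; points of Omega^n are the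
extensional functions on {..<n}.\<close>

definition prodM :: "'a measure \<Rightarrow> nat \<Rightarrow> (nat \<Rightarrow> 'a) measure" where
  "prodM M n = PiM {..<n} (\<lambda>_. M)"

definition ext_events :: "'a measure \<Rightarrow> (nat \<times> (nat \<Rightarrow> 'a) set) set" where
  "ext_events M = {(n, A). n \<ge> 1 \<and> A \<in> sets (prodM M n)}"

definition Pbar :: "'a measure \<Rightarrow> nat \<times> (nat \<Rightarrow> 'a) set \<Rightarrow> real" where
  "Pbar P e = measure (prodM P (fst e)) (snd e)"

definition Tbar :: "'a measure \<Rightarrow> real \<Rightarrow> (nat \<times> (nat \<Rightarrow> 'a) set) set" where
  "Tbar P \<delta> = {e \<in> ext_events P. Pbar P e \<ge> \<delta>}"

text \<open>Identification (Omega^n)^k = Omega^(nk): the i-th block of a point of Omega^(nk).\<close>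
definition block :: "nat \<Rightarrow> (nat \<Rightarrow> 'a) \<Rightarrow> nat \<Rightarrow> (nat \<Rightarrow> 'a)" where
  "block n \<omega> i = restrict (\<lambda>j. \<omega> (i * n + j)) {..<n}"

definition Sset :: "'a measure \<Rightarrow> nat \<times> (nat \<Rightarrow> 'a) set \<Rightarrow> real set \<Rightarrow> nat
     \<Rightarrow> nat \<times> (nat \<Rightarrow> 'a) set" where
  "Sset M e I k = (fst e * k,
     {\<omega> \<in> space (prodM M (fst e * k)).
        (1 / real k) * (\<Sum>i<k. indicator (snd e) (block (fst e) \<omega> i)) \<in> I})"

definition C_class :: "'a measure \<Rightarrow> (nat \<times> (nat \<Rightarrow> 'a) set) set \<Rightarrow> bool" where
  "C_class M C \<longleftrightarrow> C \<subseteq> ext_events M \<and>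
     (\<forall>n\<ge>1.
        (n, space (prodM M n)) \<in> C \<and>
        (\<forall>A B. (n, A) \<in> C \<longrightarrow> B \<in> sets (prodM M n) \<longrightarrow> A \<subseteq> B \<longrightarrow> (n, B) \<in> C) \<and>
        (\<forall>A B. (n, A) \<in> C \<longrightarrow> (n, B) \<in> C \<longrightarrow> A \<inter> B \<noteq> {}))"

definition definitively :: "(nat \<Rightarrow> bool) \<Rightarrow> bool" where
  "definitively Q \<longleftrightarrow> (\<exists>k0. \<forall>k>k0. Q k)"

definition C_measure :: "'a measure \<Rightarrow> (nat \<times> (nat \<Rightarrow> 'a) set) set
     \<Rightarrow> nat \<times> (nat \<Rightarrow> 'a) set \<Rightarrow> real" where
  "C_measure M C e = Sup {\<sigma> \<in> {0..1}. definitively (\<lambda>k. Sset M e {\<sigma>..1} k \<in> C)}"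

definition C_equiv :: "'a measure \<Rightarrow> (nat \<times> (nat \<Rightarrow> 'a) set) set
     \<Rightarrow> (nat \<times> (nat \<Rightarrow> 'a) set) set \<Rightarrow> bool" where
  "C_equiv M C1 C2 \<longleftrightarrow> (\<forall>e \<in> ext_events M. C_measure M C1 e = C_measure M C2 e)"

end

theory Submission
  imports Defs
begin

lemma idx_lt: "i < (k::nat) \<Longrightarrow> j < n \<Longrightarrow> i * n + j < n * k"
proof -
  assume a: "i < k" "j < n"
  have "i * n + j < i * n + n" using a by simp
  also have "\<dots> = Suc i * n" by simp
  also have "\<dots> \<le> k * n" using a by (intro mult_le_mono1) simp
  finally show ?thesis by (simp add: mult.commute)
qed

lemma block_measurable:
  assumes "i < k"
  shows "(\<lambda>\<omega>. block n \<omega> i) \<in> measurable (prodM P (n*k)) (prodM P n)"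
  unfolding block_def prodM_def
  by (intro measurable_restrict measurable_component_singleton) (use assms idx_lt in auto)

lemma block_distr:
  assumes "prob_space P" "i < k"
  shows "distr (prodM P (n*k)) (prodM P n) (\<lambda>\<omega>. block n \<omega> i) = prodM P n"
  using distr_PiM_reindex[of "{..<n*k}" "\<lambda>_. P" "\<lambda>j. i*n+j" "{..<n}"] assms
  unfolding prodM_def block_def by (simp add: inj_on_def idx_lt Pi_iff)

lemma prob_space_prodM: "prob_space P \<Longrightarrow> prob_space (prodM P n)"
  unfolding prodM_def by (intro prob_space_PiM) auto

lemma coords_indep:
  assumes P: "prob_space P" and I: "I \<noteq> {}"
  shows "prob_space.indep_vars (PiM I (\<lambda>_. P)) (\<lambda>_. P) (\<lambda>i \<omega>. \<omega> i) I"
proof -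
  interpret M: prob_space "PiM I (\<lambda>_. P)" using P by (intro prob_space_PiM) auto
  have "distr (PiM I (\<lambda>_. P)) (PiM I (\<lambda>_. P)) (\<lambda>x. \<lambda>i\<in>I. x i) = distr (PiM I (\<lambda>_. P)) (PiM I (\<lambda>_. P)) (\<lambda>x. x)"
    by (intro distr_cong) (auto simp: space_PiM)
  also have "\<dots> = PiM I (\<lambda>_. P)" by simp
  also have "\<dots> = PiM I (\<lambda>i. distr (PiM I (\<lambda>_. P)) P (\<lambda>\<omega>. \<omega> i))"
    by (intro PiM_cong refl distr_PiM_component[symmetric]) (use P in auto)
  finally show ?thesis
    by (subst M.indep_vars_iff_distr_eq_PiM'[OF I]) auto
qed

lemma blocks_disj: "disjoint_family_on (\<lambda>j. {j*n..<j*n+(n::nat)}) (L::nat set)"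
proof (unfold disjoint_family_on_def, intro ballI impI)
  fix i j :: nat assume "i \<noteq> j"
  show "{i*n..<i*n+n} \<inter> {j*n..<j*n+n} = {}"
  proof (rule ccontr)
    assume "{i*n..<i*n+n} \<inter> {j*n..<j*n+n} \<noteq> {}"
    then obtain x where "x \<in> {i*n..<i*n+n}" "x \<in> {j*n..<j*n+n}" by blast
    then have x: "i*n \<le> x" "x < i*n+n" "j*n \<le> x" "x < j*n+n" by auto
    have "x div n = i" using x by (intro div_nat_eqI) (auto simp: mult.commute)
    moreover have "x div n = j" using x by (intro div_nat_eqI) (auto simp: mult.commute)
    ultimately show False using \<open>i \<noteq> j\<close> by simp
  qed
qed

lemma blocks_indep:
  assumes P: "prob_space P" and n: "n \<ge> 1" and k: "k \<ge> 1" and A: "A \<in> sets (prodM P n)"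
  shows "prob_space.indep_vars (prodM P (n*k)) (\<lambda>_. borel)
           (\<lambda>i \<omega>. indicator A (block n \<omega> i) :: real) {..<k}"
proof -
  interpret M: prob_space "prodM P (n*k)" using P by (rule prob_space_prodM)
  have ne: "{..<n*k} \<noteq> {}" using n k by (simp add: lessThan_empty_iff)
  have ind0: "M.indep_vars (\<lambda>_. P) (\<lambda>i \<omega>. \<omega> i) {..<n*k}"
    using coords_indep[OF P ne] unfolding prodM_def .
  have ind1: "M.indep_vars (\<lambda>j. PiM {j*n..<j*n+n} (\<lambda>_. P))
        (\<lambda>j \<omega>. restrict (\<lambda>i. \<omega> i) {j*n..<j*n+n}) {..<k}"
  proof (rule M.indep_vars_restrict[OF ind0])
    fix j assume "j \<in> {..<k}"
    then show "{j*n..<j*n+n} \<subseteq> {..<n*k}"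
    proof (intro subsetI)
      fix x assume "j \<in> {..<k}" "x \<in> {j*n..<j*n+n}"
      define l where "l = x - j*n"
      then have "x = j*n+l" "l < n" using \<open>x \<in> {j*n..<j*n+n}\<close> by auto
      then show "x \<in> {..<n*k}" using idx_lt[of j k l n] \<open>j \<in> {..<k}\<close> by simp
    qed
  qed (rule blocks_disj)
  have meas: "(\<lambda>x. indicator A (\<lambda>l\<in>{..<n}. x (j*n+l)) :: real) \<in> borel_measurable (PiM {j*n..<j*n+n} (\<lambda>_. P))" for j
  proof -
    have "(\<lambda>x. \<lambda>l\<in>{..<n}. x (j*n+l)) \<in> measurable (PiM {j*n..<j*n+n} (\<lambda>_. P)) (prodM P n)"
      unfolding prodM_def by (intro measurable_restrict measurable_component_singleton) auto
    then show ?thesis using A by (intro measurable_compose[OF _ borel_measurable_indicator])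
  qed
  have "M.indep_vars (\<lambda>_. borel) (\<lambda>j \<omega>. indicator A (\<lambda>l\<in>{..<n}. restrict (\<lambda>i. \<omega> i) {j*n..<j*n+n} (j*n+l)) :: real) {..<k}"
    by (rule M.indep_vars_compose2[OF ind1]) (rule meas)
  moreover have "(\<lambda>j \<omega>. indicator A (\<lambda>l\<in>{..<n}. restrict (\<lambda>i. \<omega> i) {j*n..<j*n+n} (j*n+l)) :: real)
     = (\<lambda>i \<omega>. indicator A (block n \<omega> i))"
    unfolding block_def by (intro ext arg_cong[where f="indicator A"] restrict_ext) simp
  ultimately show ?thesis by simp
qed

definition avg :: "nat \<Rightarrow> (nat \<Rightarrow> 'a) set \<Rightarrow> nat \<Rightarrow> (nat \<Rightarrow> 'a) \<Rightarrow> real" where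
  "avg n A k \<omega> = (1 / real k) * (\<Sum>i<k. indicator A (block n \<omega> i))"

lemma X_distr:
  assumes P: "prob_space P" and A: "A \<in> sets (prodM P n)" and i: "i < k"
  shows "distr (prodM P (n*k)) borel (\<lambda>\<omega>. indicator A (block n \<omega> i) :: real) = distr (prodM P n) borel (indicator A)"
proof -
  have "distr (prodM P (n*k)) borel (\<lambda>\<omega>. indicator A (block n \<omega> i) :: real)
     = distr (distr (prodM P (n*k)) (prodM P n) (\<lambda>\<omega>. block n \<omega> i)) borel (indicator A)"
    by (subst distr_distr) (use A block_measurable[OF i] in \<open>auto simp: comp_def\<close>)
  also have "\<dots> = distr (prodM P n) borel (indicator A)" by (simp add: block_distr[OF P i])
  finally show ?thesis .
qed

lemma X_exp:
  assumes P: "prob_space P" and A: "A \<in> sets (prodM P n)" and i: "i < k"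
  shows "integral\<^sup>L (prodM P (n*k)) (\<lambda>\<omega>. indicator A (block n \<omega> i) :: real) = measure (prodM P n) A"
proof -
  interpret Pn: prob_space "prodM P n" using P by (rule prob_space_prodM)
  have "integral\<^sup>L (prodM P (n*k)) (\<lambda>\<omega>. indicator A (block n \<omega> i) :: real)
      = integral\<^sup>L (distr (prodM P (n*k)) (prodM P n) (\<lambda>\<omega>. block n \<omega> i)) (indicator A)"
    by (subst integral_distr) (use A block_measurable[OF i] in auto)
  also have "\<dots> = integral\<^sup>L (prodM P n) (indicator A)" by (simp add: block_distr[OF P i])
  also have "\<dots> = measure (prodM P n) A" using A by (simp add: Pn.emeasure_finite)
  finally show ?thesis .
qed

lemma hoeff:
  assumes P: "prob_space P" and n: "n \<ge> 1" and k: "k \<ge> 1" and A: "A \<in> sets (prodM P n)" and e: "\<epsilon> \<ge> 0"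
  shows "measure (prodM P (n*k)) {\<omega> \<in> space (prodM P (n*k)). avg n A k \<omega> \<ge> measure (prodM P n) A + \<epsilon>}
           \<le> exp (-2 * real k * \<epsilon>\<^sup>2)"
    and "measure (prodM P (n*k)) {\<omega> \<in> space (prodM P (n*k)). avg n A k \<omega> \<le> measure (prodM P n) A - \<epsilon>}
           \<le> exp (-2 * real k * \<epsilon>\<^sup>2)"
proof -
  define X where "X = (\<lambda>i \<omega>. indicator A (block n \<omega> i) :: real)"
  interpret M: prob_space "prodM P (n*k)" using P by (rule prob_space_prodM)
  have k0: "0 < k" using k by simp
  interpret H: Hoeffding_ineq_iid "prodM P (n*k)" "{..<k}" X "X 0" 0 1 "M.expectation (X 0)"
  proof unfold_locales
    show "M.indep_vars (\<lambda>_. borel) X {..<k}" unfolding X_def by (rule blocks_indep[OF P n k A])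
    show "distr (prodM P (n*k)) borel (X i) = distr (prodM P (n*k)) borel (X 0)" if "i \<in> {..<k}" for i
      unfolding X_def using X_distr[OF P A] that k0 by simp
    show "X 0 \<in> borel_measurable (prodM P (n*k))"
      unfolding X_def using A block_measurable[OF k0] by measurable
    show "AE x in prodM P (n*k). X 0 x \<in> {0..1}" unfolding X_def by (auto simp: indicator_def)
  qed simp_all
  have mu: "M.expectation (X 0) = measure (prodM P n) A" unfolding X_def using X_exp[OF P A k0] .
  have avg: "avg n A k \<omega> = (\<Sum>i\<in>{..<k}. X i \<omega>) / real (card {..<k})" for \<omega>
    by (simp add: avg_def X_def)
  show "measure (prodM P (n*k)) {\<omega> \<in> space (prodM P (n*k)). avg n A k \<omega> \<ge> measure (prodM P n) A + \<epsilon>}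
           \<le> exp (-2 * real k * \<epsilon>\<^sup>2)"
    using H.Hoeffding_ineq_ge'[OF e] k0 unfolding avg mu by (simp add: lessThan_empty_iff)
  show "measure (prodM P (n*k)) {\<omega> \<in> space (prodM P (n*k)). avg n A k \<omega> \<le> measure (prodM P n) A - \<epsilon>}
           \<le> exp (-2 * real k * \<epsilon>\<^sup>2)"
    using H.Hoeffding_ineq_le'[OF e] k0 unfolding avg mu by (simp add: lessThan_empty_iff)
qed

lemma cover:
  assumes "prob_space M" "S \<in> sets M" "B \<in> sets M" "space M \<subseteq> S \<union> B" "measure M B \<le> 1 - d"
  shows "measure M S \<ge> d"
proof -
  interpret prob_space M by fact
  have "1 = prob (space M)" by (simp add: prob_space)
  also have "\<dots> \<le> prob (S \<union> B)" using assms by (intro finite_measure_mono) auto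
  also have "\<dots> \<le> prob S + prob B" using assms by (intro measure_subadditive) auto
  finally show ?thesis using assms by simp
qed

lemma avg_meas:
  assumes A: "A \<in> sets (prodM P n)"
  shows "avg n A k \<in> borel_measurable (prodM P (n*k))"
proof -
  have "(\<lambda>\<omega>. indicator A (block n \<omega> i) :: real) \<in> borel_measurable (prodM P (n*k))" if "i \<in> {..<k}" for i
  proof -
    have "(\<lambda>\<omega>. block n \<omega> i) \<in> measurable (prodM P (n*k)) (prodM P n)" using that by (intro block_measurable) simp
    then show ?thesis using A by measurable
  qed
  then show ?thesis unfolding avg_def[abs_def]
    by (intro borel_measurable_times borel_measurable_const borel_measurable_sum) auto
qed

lemma avg_sets:
  assumes A: "A \<in> sets (prodM P n)" and S: "S \<in> sets borel"
  shows "{\<omega> \<in> space (prodM P (n*k)). avg n A k \<omega> \<in> S} \<in> sets (prodM P (n*k))"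
proof -
  have "{\<omega> \<in> space (prodM P (n*k)). avg n A k \<omega> \<in> S} = avg n A k -` S \<inter> space (prodM P (n*k))" by auto
  then show ?thesis using measurable_sets[OF avg_meas[OF A] S] by simp
qed

lemma avg_bounds:
  assumes "k \<ge> 1" shows "0 \<le> avg n A k \<omega>" "avg n A k \<omega> \<le> 1"
proof -
  have s0: "0 \<le> (\<Sum>i<k. indicator A (block n \<omega> i) :: real)" by (intro sum_nonneg) auto
  have "(\<Sum>i<k. indicator A (block n \<omega> i) :: real) \<le> (\<Sum>i<k. 1)" by (intro sum_mono) (auto simp: indicator_def)
  then have s1: "(\<Sum>i<k. indicator A (block n \<omega> i) :: real) \<le> real k" by simp
  show "0 \<le> avg n A k \<omega>" using s0 by (simp add: avg_def)
  show "avg n A k \<omega> \<le> 1" using s1 assms by (simp add: avg_def field_simps)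
qed

lemma exp_small:
  assumes e: "\<epsilon> > 0" and d: "d > (0::real)"
  shows "\<exists>k0::nat. \<forall>k>k0. exp (-2 * real k * \<epsilon>\<^sup>2) \<le> d"
proof -
  obtain k0 :: nat where k0: "- ln d / (2 * \<epsilon>\<^sup>2) < real k0" using reals_Archimedean2 by blast
  have "exp (-2 * real k * \<epsilon>\<^sup>2) \<le> d" if "k > k0" for k
  proof -
    have pe: "2 * \<epsilon>\<^sup>2 > 0" using e by simp
    have "- ln d / (2 * \<epsilon>\<^sup>2) < real k" using k0 that by linarith
    then have "- ln d < real k * (2 * \<epsilon>\<^sup>2)" using pos_divide_less_eq[OF pe] by blast
    then have "-2 * real k * \<epsilon>\<^sup>2 \<le> ln d" by (simp add: algebra_simps)
    then have "exp (-2 * real k * \<epsilon>\<^sup>2) \<le> exp (ln d)" by simp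
    then show ?thesis using d by simp
  qed
  then show ?thesis by blast
qed

lemma key:
  assumes P: "prob_space P" and d1: "1/2 < \<delta>" and d2: "\<delta> < 1"
    and T: "Tbar P \<delta> \<subseteq> C"
    and D: "\<And>m A B. m \<ge> 1 \<Longrightarrow> (m, A) \<in> C \<Longrightarrow> (m, B) \<in> C \<Longrightarrow> A \<inter> B \<noteq> {}"
    and e: "e \<in> ext_events P"
  shows "C_measure P C e = Pbar P e"
proof -
  obtain n A where eq: "e = (n, A)" and n: "n \<ge> 1" and A: "A \<in> sets (prodM P n)"
    using e unfolding ext_events_def by auto
  define p where "p = measure (prodM P n) A"
  interpret Pn: prob_space "prodM P n" using P by (rule prob_space_prodM)
  have p0: "0 \<le> p" and p1: "p \<le> 1" unfolding p_def by auto
  have Ss: "Sset P e I k = (n*k, {\<omega> \<in> space (prodM P (n*k)). avg n A k \<omega> \<in> I})" for I k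
    by (simp add: Sset_def avg_def eq)
  define \<Sigma> where "\<Sigma> = {\<sigma> \<in> {0..1}. definitively (\<lambda>k. Sset P e {\<sigma>..1} k \<in> C)}"
  have inC: "(n*k, B) \<in> C" if "k \<ge> 1" "B \<in> sets (prodM P (n*k))" "measure (prodM P (n*k)) B \<ge> \<delta>" for k B
  proof -
    have "n * k \<ge> 1" using n that(1) by simp
    then have "(n*k, B) \<in> Tbar P \<delta>" using that by (simp add: Tbar_def ext_events_def Pbar_def)
    then show ?thesis using T by auto
  qed
  have low: "\<sigma> \<in> \<Sigma>" if s0: "0 \<le> \<sigma>" and s1: "\<sigma> \<le> 1" and sp: "\<sigma> < p \<or> \<sigma> = 0" for \<sigma>
  proof -
    have "\<exists>k0. \<forall>k>k0. Sset P e {\<sigma>..1} k \<in> C"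
    proof (cases "\<sigma> = 0")
      case True
      have "Sset P e {\<sigma>..1} k \<in> C" if "k > 0" for k
      proof -
        interpret M: prob_space "prodM P (n*k)" using P by (rule prob_space_prodM)
        have "{\<omega> \<in> space (prodM P (n*k)). avg n A k \<omega> \<in> {\<sigma>..1}} = space (prodM P (n*k))"
          using avg_bounds[of k n A] that True by auto
        then show ?thesis unfolding Ss using that d2 M.prob_space by (intro inC) auto
      qed
      then show ?thesis by blast
    next
      case False
      then have sp': "\<sigma> < p" using sp by simp
      obtain k0 where k0: "\<forall>k>k0. exp (-2 * real k * (p - \<sigma>)\<^sup>2) \<le> 1 - \<delta>"
        using exp_small[of "p - \<sigma>" "1 - \<delta>"] sp' d2 by auto
      have "Sset P e {\<sigma>..1} k \<in> C" if "k > k0" for k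
      proof -
        have k: "k \<ge> 1" using that by simp
        have "measure (prodM P (n*k)) {\<omega> \<in> space (prodM P (n*k)). avg n A k \<omega> \<in> {\<sigma>..1}} \<ge> \<delta>"
        proof (rule cover[OF prob_space_prodM[OF P] avg_sets[OF A] avg_sets[OF A, of "{..p - (p - \<sigma>)}"]])
          show "space (prodM P (n*k)) \<subseteq> {\<omega> \<in> space (prodM P (n*k)). avg n A k \<omega> \<in> {\<sigma>..1}}
                  \<union> {\<omega> \<in> space (prodM P (n*k)). avg n A k \<omega> \<in> {..p - (p - \<sigma>)}}"
            using avg_bounds[OF k, of n A] by auto
          have "measure (prodM P (n*k)) {\<omega> \<in> space (prodM P (n*k)). avg n A k \<omega> \<in> {..p - (p - \<sigma>)}}
             \<le> exp (-2 * real k * (p - \<sigma>)\<^sup>2)"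
            using hoeff(2)[OF P n k A, of "p - \<sigma>"] sp' unfolding p_def by simp
          then show "measure (prodM P (n*k)) {\<omega> \<in> space (prodM P (n*k)). avg n A k \<omega> \<in> {..p - (p - \<sigma>)}} \<le> 1 - \<delta>"
            using k0 that by force
        qed auto
        then show ?thesis unfolding Ss using k by (intro inC avg_sets[OF A]) auto
      qed
      then show ?thesis by blast
    qed
    then show ?thesis unfolding \<Sigma>_def definitively_def using s0 s1 by auto
  qed
  have up: "\<sigma> \<le> p" if sS: "\<sigma> \<in> \<Sigma>" for \<sigma>
  proof (rule ccontr)
    assume "\<not> \<sigma> \<le> p"
    then have sp: "p < \<sigma>" by simp
    obtain k1 where k1: "\<forall>k>k1. Sset P e {\<sigma>..1} k \<in> C"
    proof -
      have "definitively (\<lambda>k. Sset P e {\<sigma>..1} k \<in> C)" using sS unfolding \<Sigma>_def by blast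
      then show ?thesis using that unfolding definitively_def by blast
    qed
    obtain k0 where k0: "\<forall>k>k0. exp (-2 * real k * (\<sigma> - p)\<^sup>2) \<le> 1 - \<delta>"
      using exp_small[of "\<sigma> - p" "1 - \<delta>"] sp d2 by auto
    define k where "k = Suc (max k0 k1)"
    have k: "k \<ge> 1" "k > k0" "k > k1" unfolding k_def by auto
    have S1: "(n*k, {\<omega> \<in> space (prodM P (n*k)). avg n A k \<omega> \<in> {\<sigma>..1}}) \<in> C"
      using k1 k(3) unfolding Ss by auto
    have "measure (prodM P (n*k)) {\<omega> \<in> space (prodM P (n*k)). avg n A k \<omega> \<in> {..<\<sigma>}} \<ge> \<delta>"
    proof (rule cover[OF prob_space_prodM[OF P] avg_sets[OF A] avg_sets[OF A, of "{p + (\<sigma> - p)..}"]])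
      show "space (prodM P (n*k)) \<subseteq> {\<omega> \<in> space (prodM P (n*k)). avg n A k \<omega> \<in> {..<\<sigma>}}
              \<union> {\<omega> \<in> space (prodM P (n*k)). avg n A k \<omega> \<in> {p + (\<sigma> - p)..}}"
        by auto
      have "measure (prodM P (n*k)) {\<omega> \<in> space (prodM P (n*k)). avg n A k \<omega> \<in> {p + (\<sigma> - p)..}}
         \<le> exp (-2 * real k * (\<sigma> - p)\<^sup>2)"
        using hoeff(1)[OF P n k(1) A, of "\<sigma> - p"] sp unfolding p_def by simp
      then show "measure (prodM P (n*k)) {\<omega> \<in> space (prodM P (n*k)). avg n A k \<omega> \<in> {p + (\<sigma> - p)..}} \<le> 1 - \<delta>"
        using k0 k(2) by force
    qed auto
    then have S2: "(n*k, {\<omega> \<in> space (prodM P (n*k)). avg n A k \<omega> \<in> {..<\<sigma>}}) \<in> C"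
      using k by (intro inC avg_sets[OF A]) auto
    have "n * k \<ge> 1" using n k by simp
    from D[OF this S1 S2] show False by auto
  qed
  have ne: "0 \<in> \<Sigma>" using low by simp
  have bdd: "bdd_above \<Sigma>" using up by (intro bdd_aboveI[of _ p]) auto
  have "Sup \<Sigma> = p"
  proof (rule antisym)
    show "Sup \<Sigma> \<le> p" using ne up by (intro cSup_least) auto
    show "p \<le> Sup \<Sigma>"
    proof (rule ccontr)
      assume "\<not> p \<le> Sup \<Sigma>"
      then have lt: "Sup \<Sigma> < p" by simp
      have s0: "0 \<le> Sup \<Sigma>" using cSup_upper[OF ne bdd] .
      have "(Sup \<Sigma> + p) / 2 \<in> \<Sigma>" using lt s0 p1 by (intro low) auto
      then have "(Sup \<Sigma> + p) / 2 \<le> Sup \<Sigma>" using cSup_upper[OF _ bdd] by blast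
      then show False using lt by simp
    qed
  qed
  then show ?thesis unfolding C_measure_def Pbar_def \<Sigma>_def[symmetric] using eq p_def by simp
qed

lemma Tbar_disj:
  assumes P: "prob_space P" and d1: "1/2 < \<delta>"
    and a: "(m, A) \<in> Tbar P \<delta>" and b: "(m, B) \<in> Tbar P \<delta>"
  shows "A \<inter> B \<noteq> {}"
proof
  assume dis: "A \<inter> B = {}"
  interpret M: prob_space "prodM P m" using P by (rule prob_space_prodM)
  have s: "A \<in> sets (prodM P m)" "B \<in> sets (prodM P m)" and "measure (prodM P m) A \<ge> \<delta>" "measure (prodM P m) B \<ge> \<delta>"
    using a b by (auto simp: Tbar_def ext_events_def Pbar_def)
  then have "measure (prodM P m) (A \<union> B) \<ge> 2 * \<delta>" using M.finite_measure_Union[OF s dis] by simp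
  then show False using M.prob_le_1[of "A \<union> B"] d1 by simp
qed

theorem theorem1:
  fixes P :: "'a measure" and \<delta> :: real and C :: "(nat \<times> (nat \<Rightarrow> 'a) set) set"
  assumes "prob_space P"
    and "1/2 < \<delta>" and "\<delta> < 1"
    and "C_class P C"
    and "Tbar P \<delta> \<subseteq> C"
  shows "C_equiv P (Tbar P \<delta>) C \<and> (\<forall>e \<in> ext_events P. C_measure P C e = Pbar P e)"
proof -
  have DC: "\<And>m A B. m \<ge> 1 \<Longrightarrow> (m, A) \<in> C \<Longrightarrow> (m, B) \<in> C \<Longrightarrow> A \<inter> B \<noteq> {}"
    using assms(4) unfolding C_class_def by blast
  have DT: "\<And>m A B. m \<ge> 1 \<Longrightarrow> (m, A) \<in> Tbar P \<delta> \<Longrightarrow> (m, B) \<in> Tbar P \<delta> \<Longrightarrow> A \<inter> B \<noteq> {}"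
    using Tbar_disj[OF assms(1,2)] by blast
  have 1: "C_measure P C e = Pbar P e" if "e \<in> ext_events P" for e
    using key[OF assms(1,2,3,5) DC that] .
  have 2: "C_measure P (Tbar P \<delta>) e = Pbar P e" if "e \<in> ext_events P" for e
    using key[OF assms(1,2,3) subset_refl DT that] .
  show ?thesis using 1 2 unfolding C_equiv_def by simp
qed

end
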